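(* Let $p$ be a full-support skill distribution and $q$ a full-support perception with $p\succsim_{LR}q$ (the population is under-perceived). Let $\langle S',\pi'\rangle\succsim_G\langle S,\pi\rangle$ be signal structures with $\langle S',\pi'\rangle$ MLR. Then for every monotone firm $A\subset\mathcal{A}_M$, $$W_A(p,q,\langle S',\pi'\rangle)\ \ge\ W_A(p,q,\langle S,\pi\rangle).$$
   Context: Let $\Theta\subset\mathbb{R}$ be a finite set of skill types with $|\Theta|\ge2$. Tasks are vectors $a\in\mathcal{A}:=\mathbb{R}^\Theta$. A firm is a non-empty finite set $A\subset\mathcal{A}$. It is monotone if $A\subset\mathcal{A}_M:=\{a: a(\theta')>a(\theta)\text{ whenever }\theta'>\theta\}$. A signal structure $\langle S,\pi\rangle$ consists of a non-empty finite set $S$ and a map $\pi:S\times\Theta\to[0,1]$ with $\sum_s\pi(s|\theta)=1$, such that each $s$ has $\pi(s|\theta)>0$ for some $\theta$. Pay: - $p,q\in\Delta(\Theta)$ have full support. - $q_{\langle S,\pi\rangle}(\theta|s):=q(\theta)\pi(s|\theta)/\sum_{\theta'}q(\theta')\pi(s|\theta')$. - $w_A(s,q,\langle S,\pi\rangle):=\max_{a\in A}\sum_\theta q_{\langle S,\pi\rangle}(\theta|s)a(\theta)$. - $W_A(p,q,\langle S,\pi\rangle):=\sum_\theta p(\theta)\sum_s\pi(s|\theta)w_A(s,q,\langle S,\pi\rangle)$. Orders: - $q'\succsim_{LR}q$ means $q(\theta)q'(\theta')\ge q(\theta')q'(\theta)$ whenever $\theta'>\theta$. - $\langle S',\pi'\rangle\succsim_G\langle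 S,\pi\rangle$ means there exists $g:S\times S'\to[0,1]$ with $\sum_s g(s|s')=1$ for each $s'$ and $\pi(s|\theta)=\sum_{s'}g(s|s')\pi'(s'|\theta)$ for all $s,\theta$. - $\langle S,\pi\rangle$ is MLR if $S\subset\mathbb{R}$ and $\pi(s|\theta)\pi(s'|\theta')\ge\pi(s|\theta')\pi(s'|\theta)$ whenever $s'>s$, $\theta'>\theta$. *)

theory Defs
  imports "HOL-Analysis.Analysis"
begin

text \<open>Skill types: a finite set Th of reals with at least two elements.
Tasks are functions real \<Rightarrow> real, only their values on Th matter.\<close>

definition skill_types :: "real set \<Rightarrow> bool" where
  "skill_types Th \<longleftrightarrow> finite Th \<and> card Th \<ge> 2"

definition full_support :: "real set \<Rightarrow> (real \<Rightarrow> real) \<Rightarrow> bool" where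
  "full_support Th p \<longleftrightarrow> (\<forall>\<theta>\<in>Th. p \<theta> > 0) \<and> (\<Sum>\<theta>\<in>Th. p \<theta>) = 1"

definition firm :: "(real \<Rightarrow> real) set \<Rightarrow> bool" where
  "firm A \<longleftrightarrow> finite A \<and> A \<noteq> {}"

definition monotone_firm :: "real set \<Rightarrow> (real \<Rightarrow> real) set \<Rightarrow> bool" where
  "monotone_firm Th A \<longleftrightarrow> firm A \<and>
     (\<forall>a\<in>A. \<forall>\<theta>\<in>Th. \<forall>\<theta>'\<in>Th. \<theta>' > \<theta> \<longrightarrow> a \<theta>' > a \<theta>)"

definition signal_structure :: "real set \<Rightarrow> 's set \<Rightarrow> ('s \<Rightarrow> real \<Rightarrow> real) \<Rightarrow> bool" where
  "signal_structure Th S \<pi> \<longleftrightarrow> finite S \<and> S \<noteq> {} \<and>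
     (\<forall>s\<in>S. \<forall>\<theta>\<in>Th. 0 \<le> \<pi> s \<theta> \<and> \<pi> s \<theta> \<le> 1) \<and>
     (\<forall>\<theta>\<in>Th. (\<Sum>s\<in>S. \<pi> s \<theta>) = 1) \<and>
     (\<forall>s\<in>S. \<exists>\<theta>\<in>Th. \<pi> s \<theta> > 0)"

definition posterior :: "real set \<Rightarrow> (real \<Rightarrow> real) \<Rightarrow> ('s \<Rightarrow> real \<Rightarrow> real) \<Rightarrow> 's \<Rightarrow> real \<Rightarrow> real" where
  "posterior Th q \<pi> s \<theta> = q \<theta> * \<pi> s \<theta> / (\<Sum>\<theta>'\<in>Th. q \<theta>' * \<pi> s \<theta>')"

definition wage :: "real set \<Rightarrow> (real \<Rightarrow> real) set \<Rightarrow> 's \<Rightarrow> (real \<Rightarrow> real) \<Rightarrow> ('s \<Rightarrow> real \<Rightarrow> real) \<Rightarrow> real" where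
  "wage Th A s q \<pi> = Max ((\<lambda>a. \<Sum>\<theta>\<in>Th. posterior Th q \<pi> s \<theta> * a \<theta>) ` A)"

definition pay :: "real set \<Rightarrow> (real \<Rightarrow> real) set \<Rightarrow> (real \<Rightarrow> real) \<Rightarrow> (real \<Rightarrow> real)
     \<Rightarrow> 's set \<Rightarrow> ('s \<Rightarrow> real \<Rightarrow> real) \<Rightarrow> real" where
  "pay Th A p q S \<pi> = (\<Sum>\<theta>\<in>Th. p \<theta> * (\<Sum>s\<in>S. \<pi> s \<theta> * wage Th A s q \<pi>))"

definition LR_ge :: "real set \<Rightarrow> (real \<Rightarrow> real) \<Rightarrow> (real \<Rightarrow> real) \<Rightarrow> bool" where
  "LR_ge Th q' q \<longleftrightarrow> (\<forall>\<theta>\<in>Th. \<forall>\<theta>'\<in>Th. \<theta>' > \<theta> \<longrightarrow> q \<theta> * q' \<theta>' \<ge> q \<theta>' * q' \<theta>)"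

definition garbling_ge :: "real set \<Rightarrow> 't set \<Rightarrow> ('t \<Rightarrow> real \<Rightarrow> real) \<Rightarrow> 's set \<Rightarrow> ('s \<Rightarrow> real \<Rightarrow> real) \<Rightarrow> bool" where
  "garbling_ge Th S' \<pi>' S \<pi> \<longleftrightarrow> (\<exists>g :: 's \<Rightarrow> 't \<Rightarrow> real.
     (\<forall>s\<in>S. \<forall>s'\<in>S'. 0 \<le> g s s' \<and> g s s' \<le> 1) \<and>
     (\<forall>s'\<in>S'. (\<Sum>s\<in>S. g s s') = 1) \<and>
     (\<forall>s\<in>S. \<forall>\<theta>\<in>Th. \<pi> s \<theta> = (\<Sum>s'\<in>S'. g s s' * \<pi>' s' \<theta>)))"

definition MLR :: "real set \<Rightarrow> real set \<Rightarrow> (real \<Rightarrow> real \<Rightarrow> real) \<Rightarrow> bool" where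
  "MLR Th S \<pi> \<longleftrightarrow> (\<forall>s\<in>S. \<forall>s'\<in>S. \<forall>\<theta>\<in>Th. \<forall>\<theta>'\<in>Th. s' > s \<longrightarrow> \<theta>' > \<theta> \<longrightarrow>
     \<pi> s \<theta> * \<pi> s' \<theta>' \<ge> \<pi> s \<theta>' * \<pi> s' \<theta>)"

end

theory Submission
  imports Defs
begin

lemma sym_sum_nonneg:
  fixes h :: "'i \<Rightarrow> 'i \<Rightarrow> real"
  assumes "finite I" and "\<And>i j. i \<in> I \<Longrightarrow> j \<in> I \<Longrightarrow> h i j + h j i \<ge> 0"
  shows "(\<Sum>i\<in>I. \<Sum>j\<in>I. h i j) \<ge> 0"
proof -
  have sw: "(\<Sum>i\<in>I. \<Sum>j\<in>I. h i j) = (\<Sum>i\<in>I. \<Sum>j\<in>I. h j i)"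
    by (rule sum.swap)
  have "2 * (\<Sum>i\<in>I. \<Sum>j\<in>I. h i j) = (\<Sum>i\<in>I. \<Sum>j\<in>I. h i j + h j i)"
    using sw by (simp add: sum.distrib)
  also have "\<dots> \<ge> 0" using assms(2) by (intro sum_nonneg) auto
  finally show ?thesis by simp
qed

lemma mono_expect:
  fixes \<mu> \<nu> f :: "real \<Rightarrow> real"
  assumes "finite T"
    and fm: "\<And>x y. x \<in> T \<Longrightarrow> y \<in> T \<Longrightarrow> x < y \<Longrightarrow> f x \<le> f y"
    and lr: "\<And>x y. x \<in> T \<Longrightarrow> y \<in> T \<Longrightarrow> x < y \<Longrightarrow> \<mu> y * \<nu> x \<le> \<mu> x * \<nu> y"
  shows "(\<Sum>x\<in>T. \<nu> x) * (\<Sum>x\<in>T. \<mu> x * f x) \<le> (\<Sum>x\<in>T. \<mu> x) * (\<Sum>x\<in>T. \<nu> x * f x)"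
proof -
  define h where "h x y = \<mu> x * \<nu> y * (f y - f x)" for x y
  have "(\<Sum>x\<in>T. \<Sum>y\<in>T. h x y) \<ge> 0"
  proof (rule sym_sum_nonneg[OF assms(1)])
    fix i j assume ij: "i \<in> T" "j \<in> T"
    have e: "h i j + h j i = (f j - f i) * (\<mu> i * \<nu> j - \<mu> j * \<nu> i)"
      unfolding h_def by (simp add: algebra_simps)
    consider "i < j" | "j < i" | "i = j" by linarith
    then show "h i j + h j i \<ge> 0"
    proof cases
      case 1
      then show ?thesis unfolding e using fm[OF ij 1] lr[OF ij 1] by simp
    next
      case 2
      have "f j - f i \<le> 0" using fm[OF ij(2,1) 2] by simp
      moreover have "\<mu> i * \<nu> j - \<mu> j * \<nu> i \<le> 0" using lr[OF ij(2,1) 2] by simp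
      ultimately show ?thesis unfolding e by (simp add: mult_nonpos_nonpos)
    qed (simp add: h_def)
  qed
  moreover have "(\<Sum>x\<in>T. \<Sum>y\<in>T. h x y) =
      (\<Sum>x\<in>T. \<mu> x) * (\<Sum>x\<in>T. \<nu> x * f x) - (\<Sum>x\<in>T. \<nu> x) * (\<Sum>x\<in>T. \<mu> x * f x)"
  proof -
    have "\<And>x. (\<Sum>y\<in>T. h x y) = \<mu> x * (\<Sum>y\<in>T. \<nu> y * f y) - (\<mu> x * f x) * (\<Sum>y\<in>T. \<nu> y)"
      unfolding h_def right_diff_distrib sum_subtractf sum_distrib_left by (simp add: mult_ac)
    then have "(\<Sum>x\<in>T. \<Sum>y\<in>T. h x y) = (\<Sum>x\<in>T. \<mu> x) * (\<Sum>y\<in>T. \<nu> y * f y) - (\<Sum>x\<in>T. \<mu> x * f x) * (\<Sum>y\<in>T. \<nu> y)"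
      by (simp add: sum_subtractf sum_distrib_right)
    then show ?thesis by (simp add: mult_ac)
  qed
  ultimately show ?thesis by simp
qed

lemma chebyshev:
  fixes l X Y :: "real \<Rightarrow> real"
  assumes "finite I" and l0: "\<And>i. i \<in> I \<Longrightarrow> l i \<ge> 0"
    and Xm: "\<And>x y. x \<in> I \<Longrightarrow> y \<in> I \<Longrightarrow> x < y \<Longrightarrow> X x \<le> X y"
    and Ym: "\<And>x y. x \<in> I \<Longrightarrow> y \<in> I \<Longrightarrow> x < y \<Longrightarrow> Y x \<le> Y y"
  shows "(\<Sum>i\<in>I. l i * X i) * (\<Sum>i\<in>I. l i * Y i) \<le> (\<Sum>i\<in>I. l i) * (\<Sum>i\<in>I. l i * X i * Y i)"
proof -
  define h where "h i j = l i * l j * X i * Y i - l i * l j * X j * Y i" for i j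
  have "(\<Sum>x\<in>I. \<Sum>y\<in>I. h x y) \<ge> 0"
  proof (rule sym_sum_nonneg[OF assms(1)])
    fix i j assume ij: "i \<in> I" "j \<in> I"
    have e: "h i j + h j i = (l i * l j) * ((X i - X j) * (Y i - Y j))"
      unfolding h_def by (simp add: algebra_simps)
    have ll: "l i * l j \<ge> 0" using l0 ij by simp
    consider "i < j" | "j < i" | "i = j" by linarith
    then have "(X i - X j) * (Y i - Y j) \<ge> 0"
    proof cases
      case 1
      then show ?thesis using Xm[OF ij 1] Ym[OF ij 1] by (simp add: mult_nonpos_nonpos)
    next
      case 2
      then show ?thesis using Xm[OF ij(2,1) 2] Ym[OF ij(2,1) 2] by simp
    qed simp
    then show "h i j + h j i \<ge> 0" unfolding e using ll by simp
  qed
  moreover have "(\<Sum>x\<in>I. \<Sum>y\<in>I. h x y) =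
      (\<Sum>i\<in>I. l i) * (\<Sum>i\<in>I. l i * X i * Y i) - (\<Sum>i\<in>I. l i * X i) * (\<Sum>i\<in>I. l i * Y i)"
  proof -
    have "\<And>x. (\<Sum>y\<in>I. h x y) = (l x * X x * Y x) * (\<Sum>y\<in>I. l y) - (l x * Y x) * (\<Sum>y\<in>I. l y * X y)"
      unfolding h_def sum_subtractf sum_distrib_left by (simp add: mult_ac)
    then have "(\<Sum>x\<in>I. \<Sum>y\<in>I. h x y) = (\<Sum>x\<in>I. l x * X x * Y x) * (\<Sum>y\<in>I. l y) - (\<Sum>x\<in>I. l x * Y x) * (\<Sum>y\<in>I. l y * X y)"
      by (simp add: sum_subtractf sum_distrib_right)
    then show ?thesis by (simp add: mult_ac)
  qed
  ultimately show ?thesis by simp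
qed

theorem corollary1:
  fixes Th :: "real set" and p q :: "real \<Rightarrow> real"
    and S :: "'s set" and \<pi> :: "'s \<Rightarrow> real \<Rightarrow> real"
    and S' :: "real set" and \<pi>' :: "real \<Rightarrow> real \<Rightarrow> real"
    and A :: "(real \<Rightarrow> real) set"
  assumes "skill_types Th"
    and "full_support Th p" and "full_support Th q"
    and "LR_ge Th p q"
    and "signal_structure Th S \<pi>" and "signal_structure Th S' \<pi>'"
    and "garbling_ge Th S' \<pi>' S \<pi>"
    and "MLR Th S' \<pi>'"
    and "monotone_firm Th A"
  shows "pay Th A p q S' \<pi>' \<ge> pay Th A p q S \<pi>"
proof -
  have fT: "finite Th" using assms(1) unfolding skill_types_def by simp
  have p0: "\<And>t. t \<in> Th \<Longrightarrow> p t > 0" using assms(2) unfolding full_support_def by simp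
  have q0: "\<And>t. t \<in> Th \<Longrightarrow> q t > 0" using assms(3) unfolding full_support_def by simp
  have lr: "\<And>x y. x \<in> Th \<Longrightarrow> y \<in> Th \<Longrightarrow> x < y \<Longrightarrow> q x * p y \<ge> q y * p x"
    using assms(4) unfolding LR_ge_def by blast
  have fS: "finite S" and pi0: "\<And>s t. s \<in> S \<Longrightarrow> t \<in> Th \<Longrightarrow> 0 \<le> \<pi> s t"
    and piex: "\<And>s. s \<in> S \<Longrightarrow> \<exists>t\<in>Th. \<pi> s t > 0"
    using assms(5) unfolding signal_structure_def by auto
  have fS': "finite S'" and pi0': "\<And>s t. s \<in> S' \<Longrightarrow> t \<in> Th \<Longrightarrow> 0 \<le> \<pi>' s t"
    and piex': "\<And>s. s \<in> S' \<Longrightarrow> \<exists>t\<in>Th. \<pi>' s t > 0"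
    using assms(6) unfolding signal_structure_def by auto
  obtain g :: "'s \<Rightarrow> real \<Rightarrow> real" where g0: "\<And>s s'. s \<in> S \<Longrightarrow> s' \<in> S' \<Longrightarrow> 0 \<le> g s s'"
    and g1: "\<And>s'. s' \<in> S' \<Longrightarrow> (\<Sum>s\<in>S. g s s') = 1"
    and gpi: "\<And>s t. s \<in> S \<Longrightarrow> t \<in> Th \<Longrightarrow> \<pi> s t = (\<Sum>s'\<in>S'. g s s' * \<pi>' s' t)"
    using assms(7) unfolding garbling_ge_def by blast
  have mlr: "\<And>s s' x y. s \<in> S' \<Longrightarrow> s' \<in> S' \<Longrightarrow> x \<in> Th \<Longrightarrow> y \<in> Th \<Longrightarrow> s < s' \<Longrightarrow> x < y \<Longrightarrow>
      \<pi>' s x * \<pi>' s' y \<ge> \<pi>' s y * \<pi>' s' x"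
    using assms(8) unfolding MLR_def by blast
  have finA: "finite A" "A \<noteq> {}" and amono: "\<And>a x y. a \<in> A \<Longrightarrow> x \<in> Th \<Longrightarrow> y \<in> Th \<Longrightarrow> x < y \<Longrightarrow> a x < a y"
    using assms(9) unfolding monotone_firm_def firm_def by auto

  define Q where "Q s = (\<Sum>t\<in>Th. q t * \<pi> s t)" for s
  define Q' where "Q' s = (\<Sum>t\<in>Th. q t * \<pi>' s t)" for s
  define P where "P s = (\<Sum>t\<in>Th. p t * \<pi> s t)" for s
  define P' where "P' s = (\<Sum>t\<in>Th. p t * \<pi>' s t)" for s
  define E where "E s f = (\<Sum>t\<in>Th. q t * \<pi> s t * f t) / Q s" for s f
  define E' where "E' s f = (\<Sum>t\<in>Th. q t * \<pi>' s t * f t) / Q' s" for s f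
  define w where "w s = wage Th A s q \<pi>" for s
  define w' where "w' s = wage Th A s q \<pi>'" for s
  define l where "l t = p t / q t" for t

  have Qpos: "Q s > 0" if sS0: "s \<in> S" for s
  proof -
    obtain t where t: "t \<in> Th" "\<pi> s t > 0" using piex[OF sS0] by blast
    have "0 < q t * \<pi> s t" using q0[OF t(1)] t(2) by simp
    also have "\<dots> \<le> Q s" unfolding Q_def
      by (rule member_le_sum[OF t(1)]) (use fT q0 pi0[OF sS0] in \<open>auto intro: mult_nonneg_nonneg less_imp_le\<close>)
    finally show ?thesis .
  qed
  have Qpos': "Q' s > 0" if sS0: "s \<in> S'" for s
  proof -
    obtain t where t: "t \<in> Th" "\<pi>' s t > 0" using piex'[OF sS0] by blast
    have "0 < q t * \<pi>' s t" using q0[OF t(1)] t(2) by simp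
    also have "\<dots> \<le> Q' s" unfolding Q'_def
      by (rule member_le_sum[OF t(1)]) (use fT q0 pi0'[OF sS0] in \<open>auto intro: mult_nonneg_nonneg less_imp_le\<close>)
    finally show ?thesis .
  qed
  have P'nn: "P' s \<ge> 0" if "s \<in> S'" for s
    unfolding P'_def
  proof (rule sum_nonneg)
    fix t assume "t \<in> Th"
    then show "0 \<le> p t * \<pi>' s t" using p0[of t] pi0'[OF that, of t] by simp
  qed

  have post: "(\<Sum>t\<in>Th. posterior Th q \<pi>0 s t * a t) = (\<Sum>t\<in>Th. q t * \<pi>0 s t * a t) / (\<Sum>t\<in>Th. q t * \<pi>0 s t)"
    for \<pi>0 :: "'x \<Rightarrow> real \<Rightarrow> real" and s a
    unfolding posterior_def sum_divide_distrib by (simp add: algebra_simps)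
  have wE: "w s = Max ((\<lambda>a. E s a) ` A)" for s
    unfolding w_def wage_def E_def Q_def post ..
  have wE': "w' s = Max ((\<lambda>a. E' s a) ` A)" for s
    unfolding w'_def wage_def E'_def Q'_def post ..
  have w'ge: "E' s a \<le> w' s" if "a \<in> A" for s a
    unfolding wE' using finA that by (intro Max_ge) auto

  have payS: "pay Th A p q S \<pi> = (\<Sum>s\<in>S. P s * w s)"
    unfolding pay_def P_def w_def sum_distrib_left sum_distrib_right
    by (subst sum.swap) (simp add: mult_ac)
  have payS': "pay Th A p q S' \<pi>' = (\<Sum>s\<in>S'. P' s * w' s)"
    unfolding pay_def P'_def w'_def sum_distrib_left sum_distrib_right
    by (subst sum.swap) (simp add: mult_ac)

  have Emono: "E' s f \<le> E' s' f"
    if ss: "s \<in> S'" "s' \<in> S'" "s < s'" and fm: "\<And>x y. x \<in> Th \<Longrightarrow> y \<in> Th \<Longrightarrow> x < y \<Longrightarrow> f x \<le> f y"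
    for s s' f
  proof -
    have key: "(\<Sum>x\<in>Th. q x * \<pi>' s' x) * (\<Sum>x\<in>Th. q x * \<pi>' s x * f x)
        \<le> (\<Sum>x\<in>Th. q x * \<pi>' s x) * (\<Sum>x\<in>Th. q x * \<pi>' s' x * f x)"
    proof (rule mono_expect[OF fT fm])
      fix x y assume xy: "x \<in> Th" "y \<in> Th" "x < y"
      have "\<pi>' s y * \<pi>' s' x \<le> \<pi>' s x * \<pi>' s' y" using mlr[OF ss(1,2) xy(1,2) ss(3) xy(3)] .
      then have "(q x * q y) * (\<pi>' s y * \<pi>' s' x) \<le> (q x * q y) * (\<pi>' s x * \<pi>' s' y)"
        using q0 xy by (intro mult_left_mono) (auto intro: less_imp_le)
      then show "q y * \<pi>' s y * (q x * \<pi>' s' x) \<le> q x * \<pi>' s x * (q y * \<pi>' s' y)"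
        by (simp add: mult_ac)
    qed auto
    show ?thesis unfolding E'_def using Qpos'[OF ss(1)] Qpos'[OF ss(2)] key
      by (simp add: divide_simps Q'_def mult_ac)
  qed
  have lmono: "l x \<le> l y" if "x \<in> Th" "y \<in> Th" "x < y" for x y
    unfolding l_def using lr[OF that] q0[OF that(1)] q0[OF that(2)]
    by (simp add: divide_simps mult_ac)

  have P'eq: "P' s = Q' s * E' s l" if "s \<in> S'" for s
  proof -
    have "P' s = (\<Sum>t\<in>Th. q t * \<pi>' s t * l t)"
      unfolding P'_def l_def using q0 by (intro sum.cong) (auto simp: field_simps dest: q0)
    then show ?thesis unfolding E'_def using Qpos'[OF that] by simp
  qed

  have local: "P s * w s \<le> (\<Sum>s'\<in>S'. g s s' * (P' s' * w' s'))" if sS: "s \<in> S" for s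
  proof -
    have "Max ((\<lambda>a. E s a) ` A) \<in> (\<lambda>a. E s a) ` A" using finA by (intro Max_in) auto
    then obtain a where aA: "a \<in> A" and wa: "w s = E s a" unfolding wE by auto
    define lam where "lam s' = g s s' * Q' s'" for s'
    have lam0: "lam s' \<ge> 0" if "s' \<in> S'" for s'
      unfolding lam_def using g0[OF sS that] Qpos'[OF that] by simp
    have sumlam: "(\<Sum>s'\<in>S'. lam s') = Q s"
    proof -
      have "Q s = (\<Sum>t\<in>Th. \<Sum>s'\<in>S'. g s s' * (q t * \<pi>' s' t))"
        unfolding Q_def using gpi[OF sS] by (intro sum.cong) (auto simp: sum_distrib_left mult_ac)
      also have "\<dots> = (\<Sum>s'\<in>S'. lam s')"
        unfolding lam_def Q'_def sum_distrib_left by (rule sum.swap)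
      finally show ?thesis by simp
    qed
    have sumlamf: "(\<Sum>s'\<in>S'. lam s' * E' s' f) = (\<Sum>t\<in>Th. q t * \<pi> s t * f t)" for f
    proof -
      have "(\<Sum>t\<in>Th. q t * \<pi> s t * f t) = (\<Sum>t\<in>Th. \<Sum>s'\<in>S'. g s s' * (q t * \<pi>' s' t * f t))"
        using gpi[OF sS] by (intro sum.cong) (auto simp: sum_distrib_left sum_distrib_right mult_ac)
      also have "\<dots> = (\<Sum>s'\<in>S'. g s s' * (\<Sum>t\<in>Th. q t * \<pi>' s' t * f t))"
        unfolding sum_distrib_left by (rule sum.swap)
      also have "\<dots> = (\<Sum>s'\<in>S'. lam s' * E' s' f)"
        unfolding lam_def E'_def by (intro sum.cong) (auto dest: Qpos')
      finally show ?thesis by simp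
    qed
    have sumX: "(\<Sum>s'\<in>S'. lam s' * E' s' l) = P s"
      unfolding sumlamf P_def l_def using q0 by (intro sum.cong) (auto simp: field_simps dest: q0)
    have sumY: "(\<Sum>s'\<in>S'. lam s' * E' s' a) = Q s * w s"
      unfolding sumlamf wa E_def using Qpos[OF sS] by simp
    have cheb: "(\<Sum>s'\<in>S'. lam s' * E' s' l) * (\<Sum>s'\<in>S'. lam s' * E' s' a)
        \<le> (\<Sum>s'\<in>S'. lam s') * (\<Sum>s'\<in>S'. lam s' * E' s' l * E' s' a)"
      using fS' lam0 by (rule chebyshev) (auto intro: Emono lmono amono[OF aA] less_imp_le)
    then have "Q s * (P s * w s) \<le> Q s * (\<Sum>s'\<in>S'. lam s' * E' s' l * E' s' a)"
      unfolding sumX sumY sumlam by (simp add: mult_ac)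
    then have "P s * w s \<le> (\<Sum>s'\<in>S'. lam s' * E' s' l * E' s' a)"
      using Qpos[OF sS] by simp
    also have "\<dots> \<le> (\<Sum>s'\<in>S'. g s s' * (P' s' * w' s'))"
    proof (rule sum_mono)
      fix s' assume s': "s' \<in> S'"
      have "lam s' * E' s' l * E' s' a = g s s' * P' s' * E' s' a"
        unfolding lam_def P'eq[OF s'] by simp
      also have "\<dots> \<le> g s s' * P' s' * w' s'"
        using g0[OF sS s'] P'nn[OF s'] w'ge[OF aA] by (intro mult_left_mono) auto
      finally show "lam s' * E' s' l * E' s' a \<le> g s s' * (P' s' * w' s')" by (simp add: mult_ac)
    qed
    finally show ?thesis .
  qed
  have "pay Th A p q S \<pi> \<le> (\<Sum>s\<in>S. \<Sum>s'\<in>S'. g s s' * (P' s' * w' s'))"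
    unfolding payS using local by (rule sum_mono)
  also have "\<dots> = (\<Sum>s'\<in>S'. (\<Sum>s\<in>S. g s s') * (P' s' * w' s'))"
    by (subst sum.swap) (simp add: sum_distrib_right)
  also have "\<dots> = pay Th A p q S' \<pi>'"
    unfolding payS' using g1 by simp
  finally show ?thesis .
qed

end
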